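(* Suppose the e-values are valid, i.e. $\mathbb{E}[e_t\mid\mathcal{F}_{t-1}]\le1$ a.s. whenever $\theta_t=0$. Fix $d\in(0,1]$ and define the oracle estimate of the decaying-memory FDP $$\mathrm{mem\text{-}FDP}^*(t)=\sum_{j\in\mathcal{H}_0(t)}\frac{\alpha_j}{d\,R^{\mathrm d}_{j-1}+1}.$$ Then for every $t\ge1$: if $\mathbb{E}[\mathrm{mem\text{-}FDP}^*(t)]\le\alpha$, then $\mathrm{mem\text{-}FDR}(t)\le\alpha$.
   Context: Let $\alpha\in(0,1)$ be a target level. Hypotheses are indexed by $t=1,2,\dots$; $\theta_t\in\{0,1\}$ is a fixed (non-random) indicator with $\theta_t=0$ iff the $t$-th null hypothesis is true. $e_1,e_2,\dots$ are nonnegative random variables (e-values). Testing levels $\alpha_1,\alpha_2,\dots$ are nonnegative random variables and the decisions are $\delta_t=\mathbb{1}\{e_t\ge 1/\alpha_t\}$ (with $\delta_t=0$ when $\alpha_t=0$). Let $\mathcal{F}_t=\sigma(\delta_1,\dots,\delta_t)$, $\mathcal{F}_0$ trivial; each $\alpha_t$ is required to be $\mathcal{F}_{t-1}$-measurable. $\mathcal{H}_0(t)=\{j\le t:\theta_j=0\}$. For a decay parameter $d\in(0,1]$, $R^{\mathrm d}_t=\sum_{j=1}^t d^{t-j}\delta_j$ with $R^{\mathrm d}_0=0$, and the decaying-memory FDR is $\mathrm{mem\text{-}FDR}(t)=\mathbb{E}\big[\sum_{j\in\mathcal{H}_0(t)}d^{t-j}\delta_j\big/R^{\mathrm d}_t\big]$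 with the convention $0/0=0$. *)

theory Defs
  imports "HOL-Probability.Probability"
begin

definition delta :: "(nat \<Rightarrow> 'a \<Rightarrow> real) \<Rightarrow> (nat \<Rightarrow> 'a \<Rightarrow> real) \<Rightarrow> nat \<Rightarrow> 'a \<Rightarrow> real" where
  "delta e alpha t x = (if alpha t x \<noteq> 0 \<and> e t x \<ge> 1 / alpha t x then 1 else 0)"

definition filt :: "'a measure \<Rightarrow> (nat \<Rightarrow> 'a \<Rightarrow> real) \<Rightarrow> (nat \<Rightarrow> 'a \<Rightarrow> real) \<Rightarrow> nat \<Rightarrow> 'a measure" where
  "filt M e alpha t = sigma (space M)
     {{x \<in> space M. delta e alpha j x = 1} | j. j \<in> {1..t}}"

definition Rd :: "real \<Rightarrow> (nat \<Rightarrow> 'a \<Rightarrow> real) \<Rightarrow> (nat \<Rightarrow> 'a \<Rightarrow> real) \<Rightarrow> nat \<Rightarrow> 'a \<Rightarrow> real" where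
  "Rd d e alpha t x = (\<Sum>j\<in>{1..t}. d ^ (t - j) * delta e alpha j x)"

definition H0 :: "(nat \<Rightarrow> nat) \<Rightarrow> nat \<Rightarrow> nat set" where
  "H0 theta t = {j \<in> {1..t}. theta j = 0}"

definition memFDP_star :: "real \<Rightarrow> (nat \<Rightarrow> nat) \<Rightarrow> (nat \<Rightarrow> 'a \<Rightarrow> real) \<Rightarrow> (nat \<Rightarrow> 'a \<Rightarrow> real) \<Rightarrow> nat \<Rightarrow> 'a \<Rightarrow> real" where
  "memFDP_star d theta e alpha t x =
     (\<Sum>j\<in>H0 theta t. alpha j x / (d * Rd d e alpha (j - 1) x + 1))"

(* decaying-memory FDP; division by zero gives 0 in Isabelle, matching 0/0 = 0 *)
definition memFDP :: "real \<Rightarrow> (nat \<Rightarrow> nat) \<Rightarrow> (nat \<Rightarrow> 'a \<Rightarrow> real) \<Rightarrow> (nat \<Rightarrow> 'a \<Rightarrow> real) \<Rightarrow> nat \<Rightarrow> 'a \<Rightarrow> real" where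
  "memFDP d theta e alpha t x =
     (\<Sum>j\<in>H0 theta t. d ^ (t - j) * delta e alpha j x) / Rd d e alpha t x"

definition memFDR :: "'a measure \<Rightarrow> real \<Rightarrow> (nat \<Rightarrow> nat) \<Rightarrow> (nat \<Rightarrow> 'a \<Rightarrow> real) \<Rightarrow> (nat \<Rightarrow> 'a \<Rightarrow> real) \<Rightarrow> nat \<Rightarrow> real" where
  "memFDR M d theta e alpha t = (\<integral>x. memFDP d theta e alpha t x \<partial>M)"

end

theory Submission
  imports Defs
begin

lemma delta_01: "delta e alpha j x = 0 \<or> delta e alpha j x = 1"
  by (simp add: delta_def)

lemma delta_nonneg: "0 \<le> delta e alpha j x"
  by (simp add: delta_def)

lemma Rd_Suc: "Rd d e alpha (Suc n) x = d * Rd d e alpha n x + delta e alpha (Suc n) x"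
proof -
  have "Rd d e alpha (Suc n) x = (\<Sum>j\<in>{1..n}. d ^ (Suc n - j) * delta e alpha j x) + delta e alpha (Suc n) x"
    unfolding Rd_def by simp
  also have "(\<Sum>j\<in>{1..n}. d ^ (Suc n - j) * delta e alpha j x) = d * Rd d e alpha n x"
    unfolding Rd_def sum_distrib_left
    by (rule sum.cong) (auto simp: Suc_diff_le)
  finally show ?thesis .
qed

lemma Rd_nonneg: "0 \<le> d \<Longrightarrow> 0 \<le> Rd d e alpha n x"
  unfolding Rd_def by (intro sum_nonneg mult_nonneg_nonneg delta_nonneg) auto

lemma Rd_grow: "0 \<le> d \<Longrightarrow> d ^ k * Rd d e alpha j x \<le> Rd d e alpha (j + k) x"
proof (induction k)
  case 0 then show ?case by simp
next
  case (Suc k)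
  have "d ^ Suc k * Rd d e alpha j x = d * (d ^ k * Rd d e alpha j x)" by simp
  also have "\<dots> \<le> d * Rd d e alpha (j + k) x"
    using Suc by (intro mult_left_mono) auto
  also have "\<dots> \<le> Rd d e alpha (j + Suc k) x"
    using Rd_Suc[of d e alpha "j+k" x] delta_nonneg[of e alpha "Suc (j+k)" x] by simp
  finally show ?case .
qed

lemma key_ineq:
  assumes "0 < d" "j \<in> {1..t}"
  shows "d ^ (t - j) * delta e alpha j x / Rd d e alpha t x
     \<le> delta e alpha j x / (d * Rd d e alpha (j - 1) x + 1)"
proof (cases "delta e alpha j x = 0")
  case True then show ?thesis by simp
next
  case False
  then have D: "delta e alpha j x = 1" using delta_01 by metis
  have j: "j = Suc (j - 1)" using assms by auto
  have Rj: "Rd d e alpha j x = d * Rd d e alpha (j - 1) x + 1"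
    using Rd_Suc[of d e alpha "j - 1" x] D j by simp
  have pos: "0 < d * Rd d e alpha (j - 1) x + 1"
  proof -
    have "0 \<le> d * Rd d e alpha (j - 1) x"
      using Rd_nonneg[of d e alpha "j-1" x] assms by simp
    then show ?thesis by linarith
  qed
  have "d ^ (t - j) * Rd d e alpha j x \<le> Rd d e alpha (j + (t - j)) x"
    using Rd_grow[of d "t - j" e alpha j x] assms by simp
  then have le: "d ^ (t - j) * (d * Rd d e alpha (j - 1) x + 1) \<le> Rd d e alpha t x"
    using assms Rj by simp
  have dp: "0 < d ^ (t - j)" using assms by simp
  have "d ^ (t - j) / Rd d e alpha t x \<le> d ^ (t - j) / (d ^ (t - j) * (d * Rd d e alpha (j - 1) x + 1))"
  proof (rule divide_left_mono)
    have pp: "0 < d ^ (t - j) * (d * Rd d e alpha (j - 1) x + 1)" using dp pos by simp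
    then have "0 < Rd d e alpha t x" using le by linarith
    then show "0 < Rd d e alpha t x * (d ^ (t - j) * (d * Rd d e alpha (j - 1) x + 1))"
      using pp by simp
  qed (use le dp in auto)
  also have "\<dots> = 1 / (d * Rd d e alpha (j - 1) x + 1)" using dp assms(1) by simp
  finally show ?thesis using D by simp
qed

lemma sets_filt: "sets (filt M e alpha n) = sigma_sets (space M) {{x \<in> space M. delta e alpha j x = 1} | j. j \<in> {1..n}}"
  unfolding filt_def by (rule sets_measure_of) auto

lemma space_filt: "space (filt M e alpha n) = space M"
  unfolding filt_def by (simp add: space_measure_of_conv)

lemma filt_subalg:
  assumes "\<And>i. i \<in> {1..n} \<Longrightarrow> delta e alpha i \<in> borel_measurable M"
  shows "subalgebra M (filt M e alpha n)"
proof -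
  have "{{x \<in> space M. delta e alpha j x = 1} | j. j \<in> {1..n}} \<subseteq> sets M"
    using assms by auto
  then show ?thesis unfolding subalgebra_def sets_filt space_filt
    by (simp add: sets.sigma_sets_subset)
qed

lemma delta_filt_meas:
  assumes "i \<in> {1..n}"
  shows "delta e alpha i \<in> borel_measurable (filt M e alpha n)"
proof -
  let ?S = "{x \<in> space M. delta e alpha i x = 1}"
  have S: "?S \<in> sets (filt M e alpha n)"
    unfolding sets_filt using assms by (intro sigma_sets.Basic) auto
  have "indicator ?S \<in> borel_measurable (filt M e alpha n)"
    using S by simp
  moreover have "\<And>x. x \<in> space (filt M e alpha n) \<Longrightarrow> indicator ?S x = delta e alpha i x"
    unfolding space_filt using delta_01[of e alpha i] by (auto simp: indicator_def)
  ultimately show ?thesis using measurable_cong by (metis (no_types, lifting))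
qed

lemma delta_meas_gen:
  assumes e: "\<And>j. e j \<in> borel_measurable M"
    and a: "\<And>j. 1 \<le> j \<Longrightarrow> alpha j \<in> borel_measurable (filt M e alpha (j - 1))"
  shows "\<forall>i\<in>{1..n}. delta e alpha i \<in> borel_measurable M"
proof (induction n)
  case 0 then show ?case by simp
next
  case (Suc n)
  have sub: "subalgebra M (filt M e alpha n)" using Suc filt_subalg by metis
  have "alpha (Suc n) \<in> borel_measurable (filt M e alpha n)" using a[of "Suc n"] by simp
  then have am: "alpha (Suc n) \<in> borel_measurable M"
    using measurable_from_subalg[OF sub] by blast
  have em: "e (Suc n) \<in> borel_measurable M" using e .
  have "delta e alpha (Suc n) \<in> borel_measurable M"
    unfolding delta_def[abs_def] using am em by measurable
  then show ?case using Suc by (auto simp: le_Suc_eq)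
qed

theorem theorem2:
  fixes M :: "'a measure" and e alpha :: "nat \<Rightarrow> 'a \<Rightarrow> real"
    and theta :: "nat \<Rightarrow> nat" and lvl d :: real and t :: nat
  assumes "prob_space M"
    and "0 < lvl" and "lvl < 1"
    and "0 < d" and "d \<le> 1"
    and "\<And>j. theta j \<in> {0, 1}"
    and "\<And>j. e j \<in> borel_measurable M"
    and "\<And>j x. x \<in> space M \<Longrightarrow> 0 \<le> e j x"
    and "\<And>j x. x \<in> space M \<Longrightarrow> 0 \<le> alpha j x"
    and "\<And>j. 1 \<le> j \<Longrightarrow> alpha j \<in> borel_measurable (filt M e alpha (j - 1))"
    and "\<And>j. 1 \<le> j \<Longrightarrow> theta j = 0 \<Longrightarrow>
           AE x in M. nn_cond_exp M (filt M e alpha (j - 1)) (\<lambda>y. ennreal (e j y)) x \<le> 1"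
    and "1 \<le> t"
    and "(\<integral>\<^sup>+ x. ennreal (memFDP_star d theta e alpha t x) \<partial>M) \<le> ennreal lvl"
  shows "memFDR M d theta e alpha t \<le> lvl"
proof -
  interpret P: prob_space M by fact
  note emeas = assms(7)
  have dmeas: "\<And>i. 1 \<le> i \<Longrightarrow> delta e alpha i \<in> borel_measurable M"
  proof -
    fix i :: nat assume "1 \<le> i"
    then show "delta e alpha i \<in> borel_measurable M"
      using delta_meas_gen[OF assms(7,10), of i] by auto
  qed
  have sub: "\<And>n. subalgebra M (filt M e alpha n)"
    using filt_subalg dmeas by (metis atLeastAtMost_iff)
  have Rmeas_F: "\<And>n. Rd d e alpha n \<in> borel_measurable (filt M e alpha n)"
  proof -
    fix n
    have "(\<lambda>x. \<Sum>j\<in>{1..n}. d ^ (n - j) * delta e alpha j x) \<in> borel_measurable (filt M e alpha n)"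
      by (intro borel_measurable_sum borel_measurable_times borel_measurable_const delta_filt_meas)
    then show "Rd d e alpha n \<in> borel_measurable (filt M e alpha n)"
      unfolding Rd_def[abs_def] .
  qed
  have Rmeas: "\<And>n. Rd d e alpha n \<in> borel_measurable M"
    using measurable_from_subalg[OF sub Rmeas_F] .
  have ameas: "\<And>j. 1 \<le> j \<Longrightarrow> alpha j \<in> borel_measurable M"
    using measurable_from_subalg[OF sub assms(10)] .
  have fin: "finite (H0 theta t)" unfolding H0_def by auto
  have H0sub: "\<And>j. j \<in> H0 theta t \<Longrightarrow> j \<in> {1..t} \<and> theta j = 0" unfolding H0_def by auto
  have denpos: "\<And>j x. 0 < d * Rd d e alpha j x + 1"
  proof -
    fix j x
    have "0 \<le> d * Rd d e alpha j x" using Rd_nonneg[of d e alpha j x] assms(4) by simp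
    then show "0 < d * Rd d e alpha j x + 1" by linarith
  qed
  define g where "g j x = delta e alpha j x / (d * Rd d e alpha (j - 1) x + 1)" for j x
  define h where "h j x = alpha j x / (d * Rd d e alpha (j - 1) x + 1)" for j x
  have gnn: "\<And>j x. 0 \<le> g j x" unfolding g_def using denpos delta_nonneg by (meson divide_nonneg_pos)
  have hnn: "\<And>j x. x \<in> space M \<Longrightarrow> 0 \<le> h j x" unfolding h_def using denpos assms(9) by (meson divide_nonneg_pos)
  have gmeas: "\<And>j. 1 \<le> j \<Longrightarrow> g j \<in> borel_measurable M"
    unfolding g_def[abs_def] using dmeas Rmeas by measurable
  have FDP_meas: "memFDP d theta e alpha t \<in> borel_measurable M"
    unfolding memFDP_def[abs_def] using dmeas Rmeas H0sub
    by (intro borel_measurable_divide borel_measurable_sum borel_measurable_times borel_measurable_const) auto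
  have FDP_nn: "\<And>x. 0 \<le> memFDP d theta e alpha t x"
    unfolding memFDP_def using Rd_nonneg[of d] assms(4) delta_nonneg
    by (intro divide_nonneg_nonneg sum_nonneg mult_nonneg_nonneg) auto
  have pw: "\<And>x. memFDP d theta e alpha t x \<le> (\<Sum>j\<in>H0 theta t. g j x)"
    unfolding memFDP_def g_def sum_divide_distrib
    by (intro sum_mono key_ineq[OF assms(4)]) (auto dest: H0sub)
  have step: "(\<integral>\<^sup>+ x. ennreal (g j x) \<partial>M) \<le> (\<integral>\<^sup>+ x. ennreal (h j x) \<partial>M)"
    if j: "j \<in> H0 theta t" for j
  proof -
    have j1: "1 \<le> j" and th: "theta j = 0" using H0sub[OF j] by auto
    interpret S: finite_measure_subalgebra M "filt M e alpha (j - 1)"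
      by unfold_locales (rule sub)
    have hF: "(\<lambda>x. ennreal (h j x)) \<in> borel_measurable (filt M e alpha (j - 1))"
      unfolding h_def[abs_def] using assms(10)[OF j1] Rmeas_F[of "j - 1"] by measurable
    have "(\<integral>\<^sup>+ x. ennreal (g j x) \<partial>M) \<le> (\<integral>\<^sup>+ x. ennreal (h j x) * ennreal (e j x) \<partial>M)"
    proof (rule nn_integral_mono)
      fix x assume x: "x \<in> space M"
      have "delta e alpha j x \<le> alpha j x * e j x"
        using assms(8)[OF x, of j] assms(9)[OF x, of j]
        by (auto simp: delta_def field_simps)
      then have "g j x \<le> (alpha j x * e j x) / (d * Rd d e alpha (j - 1) x + 1)"
        unfolding g_def using denpos[of "j-1" x]
        by (intro divide_right_mono) auto
      also have "\<dots> = h j x * e j x" unfolding h_def by simp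
      finally have "g j x \<le> h j x * e j x" .
      then show "ennreal (g j x) \<le> ennreal (h j x) * ennreal (e j x)"
        using hnn[OF x] assms(8)[OF x] by (simp add: ennreal_mult'[symmetric])
    qed
    also have "\<dots> = (\<integral>\<^sup>+ x. ennreal (h j x) * nn_cond_exp M (filt M e alpha (j - 1)) (\<lambda>y. ennreal (e j y)) x \<partial>M)"
      by (rule S.nn_cond_exp_intg[symmetric]) (use hF emeas in auto)
    also have "\<dots> \<le> (\<integral>\<^sup>+ x. ennreal (h j x) \<partial>M)"
    proof (rule nn_integral_mono_AE)
      show "AE x in M. ennreal (h j x) * nn_cond_exp M (filt M e alpha (j - 1)) (\<lambda>y. ennreal (e j y)) x \<le> ennreal (h j x)"
        using assms(11)[OF j1 th]
      proof eventually_elim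
        case (elim x)
        then show ?case using mult_left_mono[OF elim, of "ennreal (h j x)"] by simp
      qed
    qed
    finally show ?thesis .
  qed
  have "(\<integral>\<^sup>+ x. ennreal (memFDP d theta e alpha t x) \<partial>M) \<le> (\<integral>\<^sup>+ x. (\<Sum>j\<in>H0 theta t. ennreal (g j x)) \<partial>M)"
  proof (rule nn_integral_mono)
    fix x
    have "ennreal (memFDP d theta e alpha t x) \<le> ennreal (\<Sum>j\<in>H0 theta t. g j x)"
      using pw by (rule ennreal_leI)
    also have "\<dots> = (\<Sum>j\<in>H0 theta t. ennreal (g j x))"
      using gnn by (rule sum_ennreal[symmetric])
    finally show "ennreal (memFDP d theta e alpha t x) \<le> (\<Sum>j\<in>H0 theta t. ennreal (g j x))" .
  qed
  also have "\<dots> = (\<Sum>j\<in>H0 theta t. \<integral>\<^sup>+ x. ennreal (g j x) \<partial>M)"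
    using gmeas H0sub by (intro nn_integral_sum) auto
  also have "\<dots> \<le> (\<Sum>j\<in>H0 theta t. \<integral>\<^sup>+ x. ennreal (h j x) \<partial>M)"
    using step by (rule sum_mono)
  also have "\<dots> = (\<integral>\<^sup>+ x. (\<Sum>j\<in>H0 theta t. ennreal (h j x)) \<partial>M)"
    using ameas Rmeas H0sub unfolding h_def[abs_def]
    by (intro nn_integral_sum[symmetric]) auto
  also have "\<dots> = (\<integral>\<^sup>+ x. ennreal (memFDP_star d theta e alpha t x) \<partial>M)"
  proof (rule nn_integral_cong)
    fix x assume x: "x \<in> space M"
    have "(\<Sum>j\<in>H0 theta t. ennreal (h j x)) = ennreal (\<Sum>j\<in>H0 theta t. h j x)"
      using hnn[OF x] by (rule sum_ennreal)
    then show "(\<Sum>j\<in>H0 theta t. ennreal (h j x)) = ennreal (memFDP_star d theta e alpha t x)"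
      unfolding memFDP_star_def h_def by simp
  qed
  also have "\<dots> \<le> ennreal lvl" by (rule assms(13))
  finally have I: "(\<integral>\<^sup>+ x. ennreal (memFDP d theta e alpha t x) \<partial>M) \<le> ennreal lvl" .
  have "memFDR M d theta e alpha t = enn2real (\<integral>\<^sup>+ x. ennreal (memFDP d theta e alpha t x) \<partial>M)"
    unfolding memFDR_def using FDP_meas FDP_nn by (intro integral_eq_nn_integral) auto
  also have "\<dots> \<le> lvl"
  proof -
    have "enn2real (\<integral>\<^sup>+ x. ennreal (memFDP d theta e alpha t x) \<partial>M) \<le> enn2real (ennreal lvl)"
      using I by (rule enn2real_mono) simp
    then show ?thesis using assms(2) by simp
  qed
  finally show ?thesis .
qed

end
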